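(* Let $m\ge6$ be even, $t=m/2$, and $s$ an integer with $2\le s\le 2^{t-1}$. Let $E_1,\dots,E_\alpha$ be a partial spread in $\mathbb{F}_2^m$ and $A,B\subseteq\{1,\dots,\alpha\}$ with $|A|=|B|=s$ and $|A\cap B|=1$. Let $f=\sum_{i\in A}f_i$, $g=\sum_{i\in B}f_i$, and $F=\{f,g,f+g\}$. Then for all nonzero $\mathbf{h},\mathbf{l}\in\mathbb{F}_2^m$ with $\mathbf{h}\neq\mathbf{l}$ and all $f_1,f_2\in F$ with $f_1\neq f_2$, \[\widehat{f_1}(\mathbf{h}+\mathbf{l})+\widehat{f_2}(\mathbf{h})-\widehat{f_1+f_2}(\mathbf{l})\neq 2^m\quad\text{and}\quad \widehat{f_1}(\mathbf{h}+\mathbf{l})+\widehat{f_2}(\mathbf{l})-\widehat{f_1+f_2}(\mathbf{h})\neq 2^m.\]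
   Context: A partial spread in $\mathbb{F}_2^m$ ($m=2t$) is a set of subspaces $E_1,\dots,E_\alpha$ of $\mathbb{F}_2^m$, each of dimension $t$, with $E_i\cap E_j=\{\mathbf{0}\}$ for $i\ne j$. $f_i:\mathbb{F}_2^m\to\mathbb{F}_2$ is the indicator function of $E_i\setminus\{\mathbf{0}\}$; sums of Boolean functions are mod 2. For a Boolean function $h$, $\widehat{h}(\mathbf{w})=\sum_{\mathbf{x}\in\mathbb{F}_2^m}(-1)^{h(\mathbf{x})+\mathbf{w}\cdot\mathbf{x}}$ with the standard inner product. *)

theory Defs
  imports "HOL-Analysis.Analysis" "HOL-Library.Z2"
begin

definition dotp :: "bit ^ 'm \<Rightarrow> bit ^ 'm \<Rightarrow> bit" where
  "dotp w x = (\<Sum>i\<in>UNIV. w $ i * x $ i)"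

definition walsh :: "(bit ^ 'm \<Rightarrow> bit) \<Rightarrow> bit ^ 'm \<Rightarrow> int" where
  "walsh h w = (\<Sum>x\<in>UNIV. (-1::int) ^ (if h x + dotp w x = 0 then 0 else 1))"

definition partial_spread :: "nat \<Rightarrow> nat \<Rightarrow> (nat \<Rightarrow> (bit ^ 'm) set) \<Rightarrow> bool" where
  "partial_spread t \<alpha> E \<longleftrightarrow>
     (\<forall>i\<in>{1..\<alpha>}. vec.subspace (E i) \<and> vec.dim (E i) = t) \<and>
     (\<forall>i\<in>{1..\<alpha>}. \<forall>j\<in>{1..\<alpha>}. i \<noteq> j \<longrightarrow> E i \<inter> E j = {0})"

definition spread_fun :: "(bit ^ 'm) set \<Rightarrow> bit ^ 'm \<Rightarrow> bit" where
  "spread_fun S x = (if x \<in> S \<and> x \<noteq> 0 then 1 else 0)"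

end

theory Submission
  imports Defs
begin


instance bit :: finite
proof
  have "(UNIV::bit set) = {0,1}" by (auto intro: bit.exhaust)
  then show "finite (UNIV::bit set)" by (metis finite.emptyI finite.insertI)
qed

lemma card_bit: "CARD(bit) = 2"
proof -
  have "(UNIV::bit set) = {0,1}" by (auto intro: bit.exhaust)
  then show ?thesis unfolding \<open>UNIV = _\<close> by simp
qed

definition chi :: "bit \<Rightarrow> int" where "chi b = (if b = 0 then 1 else -1)"

lemma chi_add: "chi (a + b) = chi a * chi b"
  by (cases a; cases b) (simp_all add: chi_def)

lemma dotp_add: "dotp w (x + y) = dotp w x + dotp w y"
  unfolding dotp_def by (simp add: distrib_left sum.distrib del: add_bit_eq_xor mult_bit_eq_and)

lemma dotp_zero[simp]: "dotp w 0 = 0"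
  unfolding dotp_def by simp

lemma dotp_axis: "dotp w (axis i 1) = w $ i"
  unfolding dotp_def axis_def by (simp add: if_distrib cong: if_cong)

lemma vec_self_add: "(y::bit^'m) + y = 0"
  by (simp add: vec_eq_iff)

lemma exists_dotp_one: "(w::bit^'m) \<noteq> 0 \<Longrightarrow> \<exists>x. dotp w x = 1"
proof -
  assume "w \<noteq> 0"
  then obtain i where "w $ i \<noteq> 0" by (auto simp: vec_eq_iff)
  then show ?thesis using dotp_axis[of w i] by auto
qed

lemma char_sum_subspace:
  assumes "vec.subspace (E::(bit^'m) set)"
  shows "(\<Sum>x\<in>E. chi (dotp w x)) = (if (\<forall>x\<in>E. dotp w x = 0) then int (card E) else 0)"
proof (cases "\<forall>x\<in>E. dotp w x = 0")
  case True
  then show ?thesis by (simp add: chi_def)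
next
  case False
  then obtain y where y: "y \<in> E" "dotp w y = 1" by auto
  have "(\<Sum>x\<in>E. chi (dotp w x)) = (\<Sum>x\<in>E. chi (dotp w (x + y)))"
    apply (rule sum.reindex_bij_witness[of _ "\<lambda>x. x + y" "\<lambda>x. x + y"])
    using y assms by (auto simp: add.assoc vec_self_add vec.subspace_add)
  also have "\<dots> = - (\<Sum>x\<in>E. chi (dotp w x))"
    by (simp add: dotp_add chi_add y sum_negf chi_def[of 1] del: add_bit_eq_xor)
  finally have eq: "(\<Sum>x\<in>E. chi (dotp w x)) = 0" by simp
  show ?thesis by (subst if_not_P[OF False]) (rule eq)
qed

lemma walsh_nonzero:
  assumes "(w::bit^'m) \<noteq> 0"
  shows "walsh h w = -2 * (\<Sum>x\<in>{x. h x = 1}. chi (dotp w x))"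
proof -
  have "walsh h w = (\<Sum>x\<in>UNIV. chi (h x) * chi (dotp w x))"
    unfolding walsh_def chi_add[symmetric] by (rule sum.cong) (auto simp: chi_def)
  also have "\<dots> = (\<Sum>x\<in>UNIV. chi (dotp w x) - 2 * (if h x = 1 then chi (dotp w x) else 0))"
    by (rule sum.cong) (auto simp: chi_def)
  also have "\<dots> = (\<Sum>x\<in>UNIV. chi (dotp w x)) - 2 * (\<Sum>x\<in>{x. h x = 1}. chi (dotp w x))"
    using sum.inter_filter[of UNIV "\<lambda>x. chi (dotp w x)" "\<lambda>x. h x = 1"]
    by (simp add: sum_subtractf sum_distrib_left[symmetric])
  also have "(\<Sum>x\<in>UNIV. chi (dotp w x)) = 0"
    using char_sum_subspace[OF vec.subspace_UNIV, of w] exists_dotp_one[OF assms] by auto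
  finally show ?thesis by simp
qed



definition SS :: "(bit^'m) set \<Rightarrow> bit^'m \<Rightarrow> int" where
  "SS E w = (\<Sum>x\<in>E. chi (dotp w x))"

lemma ps_subspace: "partial_spread t \<alpha> E \<Longrightarrow> i \<in> {1..\<alpha>} \<Longrightarrow> vec.subspace (E i)"
  unfolding partial_spread_def by auto

lemma ps_dim: "partial_spread t \<alpha> E \<Longrightarrow> i \<in> {1..\<alpha>} \<Longrightarrow> vec.dim (E i) = t"
  unfolding partial_spread_def by auto

lemma ps_disj: "partial_spread t \<alpha> E \<Longrightarrow> i \<in> {1..\<alpha>} \<Longrightarrow> j \<in> {1..\<alpha>} \<Longrightarrow> i \<noteq> j \<Longrightarrow> E i \<inter> E j = {0}"
  unfolding partial_spread_def by auto

lemma support_eq: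
  assumes ps: "partial_spread t \<alpha> E" and I: "I \<subseteq> {1..\<alpha>}"
  shows "{x. (\<Sum>i\<in>I. spread_fun (E i) x) = 1} = (\<Union>i\<in>I. E i - {0})"
proof (intro set_eqI iffI)
  have fI: "finite I" using I finite_subset by blast
  fix x
  {
    assume "x \<in> (\<Union>i\<in>I. E i - {0})"
    then obtain i where i: "i \<in> I" "x \<in> E i" "x \<noteq> 0" by auto
    have "(\<Sum>i\<in>I. spread_fun (E i) x) = spread_fun (E i) x + (\<Sum>j\<in>I - {i}. spread_fun (E j) x)"
      using fI i(1) by (simp add: sum.remove del: add_bit_eq_xor)
    also have "(\<Sum>j\<in>I - {i}. spread_fun (E j) x) = 0"
    proof (rule sum.neutral, intro ballI)
      fix j assume j: "j \<in> I - {i}"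
      have "i \<in> {1..\<alpha>}" "j \<in> {1..\<alpha>}" "i \<noteq> j" using j I i(1) by auto
      then have "E i \<inter> E j = {0}" using ps_disj[OF ps] by blast
      then have "x \<notin> E j" using i by auto
      then show "spread_fun (E j) x = 0" by (simp add: spread_fun_def)
    qed
    finally show "x \<in> {x. (\<Sum>i\<in>I. spread_fun (E i) x) = 1}"
      using i by (simp add: spread_fun_def del: add_bit_eq_xor)
  }
  {
    assume "x \<in> {x. (\<Sum>i\<in>I. spread_fun (E i) x) = 1}"
    then have "(\<Sum>i\<in>I. spread_fun (E i) x) \<noteq> 0" by simp
    then obtain i where "i \<in> I" "spread_fun (E i) x \<noteq> 0"
      by (meson sum.neutral)
    then show "x \<in> (\<Union>i\<in>I. E i - {0})" by (auto simp: spread_fun_def split: if_splits)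
  }
qed

lemma walsh_fI:
  assumes ps: "partial_spread t \<alpha> E" and I: "I \<subseteq> {1..\<alpha>}" and w: "w \<noteq> 0"
  shows "walsh (\<lambda>x. \<Sum>i\<in>I. spread_fun (E i) x) w = 2 * int (card I) - 2 * (\<Sum>i\<in>I. SS (E i) w)"
proof -
  have fI: "finite I" using I finite_subset by blast
  have "walsh (\<lambda>x. \<Sum>i\<in>I. spread_fun (E i) x) w = -2 * (\<Sum>x\<in>(\<Union>i\<in>I. E i - {0}). chi (dotp w x))"
    using walsh_nonzero[OF w] support_eq[OF ps I] by simp
  also have "(\<Sum>x\<in>(\<Union>i\<in>I. E i - {0}). chi (dotp w x)) = (\<Sum>i\<in>I. \<Sum>x\<in>E i - {0}. chi (dotp w x))"
  proof (rule sum.UNION_disjoint[OF fI])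
    show "\<forall>i\<in>I. finite (E i - {0})" by simp
    show "\<forall>i\<in>I. \<forall>j\<in>I. i \<noteq> j \<longrightarrow> (E i - {0}) \<inter> (E j - {0}) = {}"
      using ps_disj[OF ps] I by blast
  qed
  also have "\<dots> = (\<Sum>i\<in>I. SS (E i) w - 1)"
  proof (rule sum.cong[OF refl])
    fix i assume "i \<in> I"
    then have "0 \<in> E i" using ps_subspace[OF ps] I vec.subspace_0 by blast
    then show "(\<Sum>x\<in>E i - {0}. chi (dotp w x)) = SS (E i) w - 1"
      unfolding SS_def by (simp add: sum.remove chi_def)
  qed
  finally show ?thesis by (simp add: sum_subtractf)
qed

lemma SS_val:
  assumes ps: "partial_spread t \<alpha> E" and i: "i \<in> {1..\<alpha>}"
  shows "SS (E i) w = (if (\<forall>x\<in>E i. dotp w x = 0) then int (card (E i)) else 0)"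
  unfolding SS_def using char_sum_subspace[OF ps_subspace[OF ps i]] by simp

lemma dual_disj:
  assumes ps: "partial_spread t \<alpha> E" and i: "i \<in> {1..\<alpha>}" and j: "j \<in> {1..\<alpha>}" and ij: "i \<noteq> j"
    and m: "CARD('m) = 2 * t"
    and wi: "\<forall>x\<in>E i. dotp w x = 0" and wj: "\<forall>x\<in>E j. dotp w x = 0"
  shows "(w::bit^'m) = 0"
proof -
  let ?U = "{x + y |x y. x \<in> E i \<and> y \<in> E j}"
  have su: "vec.subspace ?U" using vec.subspace_sums ps_subspace[OF ps i] ps_subspace[OF ps j] by blast
  have "vec.dim ?U + vec.dim (E i \<inter> E j) = vec.dim (E i) + vec.dim (E j)"
    using vec.dim_sums_Int ps_subspace[OF ps i] ps_subspace[OF ps j] by blast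
  moreover have "vec.dim (E i \<inter> E j) = 0" using ps_disj[OF ps i j ij] by simp
  ultimately have "vec.dim ?U = CARD('m)" using ps_dim[OF ps i] ps_dim[OF ps j] m by simp
  then have d: "vec.dim ?U = vec.dim (UNIV::(bit^'m) set)" by (simp add: vec_dim_card card_cart_basis)
  have spU: "vec.span ?U = UNIV"
    by (subst vec.dim_eq_full[symmetric]) (use d in \<open>simp add: vec.dimension_def\<close>)
  have "vec.span ?U = ?U" using su by (simp only: vec.span_eq_iff)
  then have U: "?U = UNIV" using spU by simp
  have "\<forall>z. dotp w z = 0"
  proof
    fix z
    have "z \<in> ?U" using U by blast
    then obtain x y where "z = x + y" "x \<in> E i" "y \<in> E j" by blast
    then show "dotp w z = 0" using wi wj by (simp add: dotp_add del: add_bit_eq_xor)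
  qed
  then show ?thesis using dotp_axis[of w] by (simp add: vec_eq_iff)
qed

lemma grp1: "(x::'a::ab_group_add) + y = x' + y' \<Longrightarrow> x - x' = y' - y"
  by (simp add: algebra_simps)
lemma grp2: "(x::'a::ab_group_add) - x' = 0 \<Longrightarrow> x + y = x' + y' \<Longrightarrow> x = x' \<and> y = y'"
  by simp

lemma card_prod_le:
  fixes E :: "nat \<Rightarrow> (bit^'m::finite) set"
  assumes ps: "partial_spread t \<alpha> E" and i: "i \<in> {1..\<alpha>}" and j: "j \<in> {1..\<alpha>}" and ij: "i \<noteq> j"
  shows "card (E i) * card (E j) \<le> 2 ^ CARD('m)"
proof -
  have "inj_on (\<lambda>(x,y). x + y) (E i \<times> E j)"
  proof (rule inj_onI, clarsimp)
    fix x y x' y' assume xy: "x \<in> E i" "y \<in> E j" "x' \<in> E i" "y' \<in> E j" and eq: "x + y = (x' + y' :: bit^'m)"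
    from eq have d: "x - x' = y' - y" by (rule grp1)
    have a: "x - x' \<in> E i" by (rule vec.subspace_diff[OF ps_subspace[OF ps i] xy(1) xy(3)])
    have b: "y' - y \<in> E j" by (rule vec.subspace_diff[OF ps_subspace[OF ps j] xy(4) xy(2)])
    have "x - x' \<in> E i \<inter> E j" using a b unfolding d by (rule IntI)
    then have "x - x' = 0" unfolding ps_disj[OF ps i j ij] by (rule singletonD)
    then show "x = x' \<and> y = y'" using eq by (rule grp2)
  qed
  then have "card (E i \<times> E j) \<le> card (UNIV :: (bit^'m) set)"
    by (rule card_inj_on_le) auto
  then show ?thesis by (simp add: card_cartesian_product card_bit)
qed

lemma card_ge_dim:
  assumes ps: "partial_spread t \<alpha> E" and i: "i \<in> {1..\<alpha>}"
  shows "t + 1 \<le> card (E i)"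
proof -
  obtain B where B: "B \<subseteq> E i" "vec.independent B" "E i \<subseteq> vec.span B" "card B = vec.dim (E i)"
    using vec.basis_exists by blast
  have "0 \<notin> B" using B(2) vec.dependent_zero by blast
  moreover have "finite B" using B(2) vec.finiteI_independent by blast
  moreover have "0 \<in> E i" using ps_subspace[OF ps i] vec.subspace_0 by blast
  ultimately have "card (insert 0 B) = t + 1" "insert 0 B \<subseteq> E i"
    using B ps_dim[OF ps i] by auto
  then show ?thesis by (metis card_mono finite_subset subset_UNIV finite)
qed



lemma bit_add_self: "(z::bit) + z = 0"
  by (cases z) simp_all

lemma sum_symdiff:
  fixes g :: "nat \<Rightarrow> bit"
  assumes "finite A" "finite B"
  shows "sum g A + sum g B = sum g ((A - B) \<union> (B - A))"
proof -
  have a: "sum g A = sum g (A - B) + sum g (A \<inter> B)"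
  proof -
    have "A = (A - B) \<union> (A \<inter> B)" by blast
    then have "sum g A = sum g ((A - B) \<union> (A \<inter> B))" by simp
    also have "\<dots> = sum g (A - B) + sum g (A \<inter> B)"
      using assms by (intro sum.union_disjoint) auto
    finally show ?thesis .
  qed
  have b: "sum g B = sum g (B - A) + sum g (A \<inter> B)"
  proof -
    have "B = (B - A) \<union> (A \<inter> B)" by blast
    then have "sum g B = sum g ((B - A) \<union> (A \<inter> B))" by simp
    also have "\<dots> = sum g (B - A) + sum g (A \<inter> B)"
      using assms by (intro sum.union_disjoint) auto
    finally show ?thesis .
  qed
  have c: "sum g ((A - B) \<union> (B - A)) = sum g (A - B) + sum g (B - A)"
    using assms by (intro sum.union_disjoint) auto
  have "sum g A + sum g B = sum g (A - B) + sum g (B - A) + (sum g (A \<inter> B) + sum g (A \<inter> B))"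
    unfolding a b by (simp only: ac_simps)
  then show ?thesis unfolding c bit_add_self by simp
qed

lemma SS_cases:
  assumes ps: "partial_spread t \<alpha> E" and i: "i \<in> {1..\<alpha>}"
  shows "SS (E i) w = 0 \<or> ((\<forall>x\<in>E i. dotp w x = 0) \<and> SS (E i) w = int (card (E i)))"
proof -
  have h: "SS (E i) w = (if (\<forall>x\<in>E i. dotp w x = 0) then int (card (E i)) else 0)"
    by (rule SS_val[OF ps i])
  show ?thesis
  proof (cases "\<forall>x\<in>E i. dotp w x = 0")
    case True
    have "SS (E i) w = int (card (E i))" using h by (simp only: if_P[OF True])
    then show ?thesis using True by blast
  next
    case False
    have "SS (E i) w = 0" using h by (simp only: if_not_P[OF False])
    then show ?thesis by blast
  qed
qed

lemma sumSS_bounds: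
  fixes E :: "nat \<Rightarrow> (bit^'m::finite) set"
  assumes ps: "partial_spread t \<alpha> E" and I: "I \<subseteq> {1..\<alpha>}" and w: "w \<noteq> 0"
    and m: "CARD('m) = 2 * t"
    and cb: "\<forall>j\<in>{1..\<alpha>}. 4 * card (E j) \<le> 2 ^ CARD('m)"
  shows "0 \<le> (\<Sum>i\<in>I. SS (E i) w)" and "4 * (\<Sum>i\<in>I. SS (E i) w) \<le> 2 ^ CARD('m)"
proof -
  have fI: "finite I" using I finite_subset by blast
  have nn: "\<And>i. i \<in> I \<Longrightarrow> 0 \<le> SS (E i) w"
  proof -
    fix i assume "i \<in> I"
    then have "i \<in> {1..\<alpha>}" using I by blast
    from SS_cases[OF ps this, of w] show "0 \<le> SS (E i) w" by linarith
  qed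
  then show "0 \<le> (\<Sum>i\<in>I. SS (E i) w)" by (simp add: sum_nonneg)
  show "4 * (\<Sum>i\<in>I. SS (E i) w) \<le> 2 ^ CARD('m)"
  proof (cases "\<exists>j\<in>I. SS (E j) w \<noteq> 0")
    case False
    then have "(\<Sum>i\<in>I. SS (E i) w) = 0" by simp
    then show ?thesis by simp
  next
    case True
    then obtain j where j: "j \<in> I" "SS (E j) w \<noteq> 0" by blast
    have jr: "j \<in> {1..\<alpha>}" using j I by auto
    have wj: "\<forall>x\<in>E j. dotp w x = 0" and sj: "SS (E j) w = int (card (E j))"
      using j(2) SS_cases[OF ps jr, of w] by blast+
    have rest: "(\<Sum>i\<in>I - {j}. SS (E i) w) = 0"
    proof (rule sum.neutral, rule ballI)
      fix i assume i: "i \<in> I - {j}"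
      then have ir: "i \<in> {1..\<alpha>}" "i \<noteq> j" using I by auto
      show "SS (E i) w = 0"
      proof (rule ccontr)
        assume "SS (E i) w \<noteq> 0"
        then have "\<forall>x\<in>E i. dotp w x = 0" using SS_cases[OF ps ir(1), of w] by blast
        then have "w = 0" by (rule dual_disj[OF ps ir(1) jr ir(2) m _ wj])
        then show False using w by simp
      qed
    qed
    have "(\<Sum>i\<in>I. SS (E i) w) = SS (E j) w + (\<Sum>i\<in>I - {j}. SS (E i) w)"
      by (rule sum.remove[OF fI j(1)])
    then have "(\<Sum>i\<in>I. SS (E i) w) = int (card (E j))" using rest sj by simp
    moreover have "4 * card (E j) \<le> 2 ^ CARD('m)" using cb jr by (rule bspec)
    then have "int (4 * card (E j)) \<le> int (2 ^ CARD('m))" by (simp only: of_nat_le_iff)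
    then have "4 * int (card (E j)) \<le> 2 ^ CARD('m)" by simp
    ultimately show ?thesis by simp
  qed
qed

definition fS :: "(nat \<Rightarrow> (bit^'m) set) \<Rightarrow> nat set \<Rightarrow> bit^'m \<Rightarrow> bit" where
  "fS E I = (\<lambda>x. \<Sum>i\<in>I. spread_fun (E i) x)"

lemma key:
  fixes E :: "nat \<Rightarrow> (bit^'m::finite) set"
  assumes ps: "partial_spread t \<alpha> E" and m: "CARD('m) = 2 * t" and t3: "3 \<le> t"
    and cb: "\<forall>j\<in>{1..\<alpha>}. 4 * card (E j) \<le> 2 ^ CARD('m)"
    and I1: "I1 \<subseteq> {1..\<alpha>}" and I2: "I2 \<subseteq> {1..\<alpha>}" and I3: "I3 \<subseteq> {1..\<alpha>}"
    and c: "int (card I1) + int (card I2) - int (card I3) < 2 ^ t"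
    and u: "u \<noteq> 0" and v: "v \<noteq> 0" and w: "w \<noteq> 0"
  shows "walsh (fS E I1) u + walsh (fS E I2) v - walsh (fS E I3) w \<noteq> 2 ^ CARD('m)"
proof -
  define P1 where "P1 = (\<Sum>i\<in>I1. SS (E i) u)"
  define P2 where "P2 = (\<Sum>i\<in>I2. SS (E i) v)"
  define P3 where "P3 = (\<Sum>i\<in>I3. SS (E i) w)"
  define X :: int where "X = 2 ^ t"
  have X8: "8 \<le> X" unfolding X_def using power_increasing[OF t3, of "2::int"] by simp
  have XX: "(2::int) ^ CARD('m) = X * X" unfolding X_def m by (simp add: power_mult_distrib mult_2 power_add)
  have w1: "walsh (fS E I1) u = 2 * int (card I1) - 2 * P1"
    unfolding fS_def P1_def using walsh_fI[OF ps I1 u] .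
  have w2: "walsh (fS E I2) v = 2 * int (card I2) - 2 * P2"
    unfolding fS_def P2_def using walsh_fI[OF ps I2 v] .
  have w3: "walsh (fS E I3) w = 2 * int (card I3) - 2 * P3"
    unfolding fS_def P3_def using walsh_fI[OF ps I3 w] .
  have p1: "0 \<le> P1" unfolding P1_def using sumSS_bounds(1)[OF ps I1 u m cb] .
  have p2: "0 \<le> P2" unfolding P2_def using sumSS_bounds(1)[OF ps I2 v m cb] .
  have p3: "4 * P3 \<le> X * X" unfolding P3_def XX[symmetric] using sumSS_bounds(2)[OF ps I3 w m cb] .
  have c': "int (card I1) + int (card I2) - int (card I3) \<le> X - 1" using c unfolding X_def by simp
  have "8 * X \<le> X * X" using X8 by (simp add: mult_right_mono)
  then have "walsh (fS E I1) u + walsh (fS E I2) v - walsh (fS E I3) w < X * X"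
    unfolding w1 w2 w3 using p1 p2 p3 c' X8 by linarith
  then show ?thesis unfolding XX by simp
qed



lemma bit_canc: "a + (a + b) = (b::bit)" "(a + b) + a = b" "(a + b) + b = a" "b + (a + b) = a"
  by (cases a; cases b; simp)+

theorem lemma7:
  fixes m t s \<alpha> :: nat
    and E :: "nat \<Rightarrow> (bit ^ 'm) set"
    and A B :: "nat set"
    and f g :: "bit ^ 'm \<Rightarrow> bit"
    and F :: "(bit ^ 'm \<Rightarrow> bit) set"
  assumes "CARD('m) = m" and "m \<ge> 6" and "even m" and "t = m div 2"
    and "2 \<le> s" and "s \<le> 2 ^ (t - 1)"
    and "partial_spread t \<alpha> E"
    and "A \<subseteq> {1..\<alpha>}" and "B \<subseteq> {1..\<alpha>}"
    and "card A = s" and "card B = s" and "card (A \<inter> B) = 1"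
    and "f = (\<lambda>x. \<Sum>i\<in>A. spread_fun (E i) x)"
    and "g = (\<lambda>x. \<Sum>i\<in>B. spread_fun (E i) x)"
    and "F = {f, g, \<lambda>x. f x + g x}"
  shows "\<forall>h l f1 f2. h \<noteq> 0 \<and> l \<noteq> 0 \<and> h \<noteq> l \<and> f1 \<in> F \<and> f2 \<in> F \<and> f1 \<noteq> f2 \<longrightarrow>
           walsh f1 (h + l) + walsh f2 h - walsh (\<lambda>x. f1 x + f2 x) l \<noteq> 2 ^ m \<and>
           walsh f1 (h + l) + walsh f2 l - walsh (\<lambda>x. f1 x + f2 x) h \<noteq> 2 ^ m"
proof -
  have ps: "partial_spread t \<alpha> E" by fact
  have mm: "m = 2 * t" using assms(3,4) by simp
  have m2: "CARD('m) = 2 * t" using assms(1) mm by simp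
  have t3: "3 \<le> t" using assms(2) mm by simp
  have fA: "finite A" "finite B" using assms(8,9) finite_subset by blast+
  define C where "C = (A - B) \<union> (B - A)"
  have C: "C \<subseteq> {1..\<alpha>}" using assms(8,9) unfolding C_def by blast
  have cAB: "card (A - B) = s - 1" using card_Diff_subset_Int[of A B] fA assms(10,12) by simp
  have cBA: "card (B - A) = s - 1" using card_Diff_subset_Int[of B A] fA assms(11,12) by (simp add: Int_commute)
  have dj: "(A - B) \<inter> (B - A) = {}" by blast
  have "card C = (s - 1) + (s - 1)" unfolding C_def using card_Un_disjoint[OF _ _ dj] fA cAB cBA by simp
  then have cC: "card C = 2 * s - 2" using assms(5) by simp
  have ffA: "f = fS E A" unfolding assms(13) fS_def ..
  have ffB: "g = fS E B" unfolding assms(14) fS_def ..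
  have ffC: "(\<lambda>x. f x + g x) = fS E C"
    unfolding assms(13,14) fS_def C_def using sum_symdiff[OF fA] by simp
  have tS: "t = Suc (t - 1)" using t3 by simp
  have pw: "2 * 2 ^ (t - 1) = (2::nat) ^ t" by (subst (2) tS) (simp only: power_Suc)
  have sn: "2 * s \<le> 2 ^ t" using assms(6) pw by linarith
  have sX: "2 * int s \<le> 2 ^ t"
  proof -
    have "int (2 * s) \<le> int (2 ^ t)" using sn by (simp only: of_nat_le_iff)
    then show ?thesis by simp
  qed
  have X8: "(8::int) \<le> 2 ^ t" using power_increasing[OF t3, of "2::int"] by simp
  have cC': "int (card C) = 2 * int s - 2" using cC assms(5) by simp
  have cb: "\<forall>j\<in>{1..\<alpha>}. 4 * card (E j) \<le> 2 ^ CARD('m)"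
  proof
    fix j assume j: "j \<in> {1..\<alpha>}"
    have "card (A - {j}) \<ge> 1" using assms(5,10) fA by (auto simp add: card_Diff_singleton_if)
    then have "A - {j} \<noteq> {}" by (metis card.empty not_one_le_zero)
    then obtain k where k: "k \<in> A" "k \<noteq> j" by blast
    have kr: "k \<in> {1..\<alpha>}" using k assms(8) by blast
    have "card (E j) * card (E k) \<le> 2 ^ CARD('m)" using card_prod_le[OF ps j kr] k by auto
    moreover have "4 \<le> card (E k)" using card_ge_dim[OF ps kr] t3 by simp
    ultimately show "4 * card (E j) \<le> 2 ^ CARD('m)"
      by (metis le_trans mult.commute mult_le_mono2)
  qed
  have K: "walsh (fS E I1) u + walsh (fS E I2) v - walsh (fS E I3) w \<noteq> 2 ^ m"
    if "I1 \<subseteq> {1..\<alpha>}" "I2 \<subseteq> {1..\<alpha>}" "I3 \<subseteq> {1..\<alpha>}"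
       "int (card I1) + int (card I2) - int (card I3) < 2 ^ t" "u \<noteq> 0" "v \<noteq> 0" "w \<noteq> 0"
    for I1 I2 I3 u v w
    using key[OF ps m2 t3 cb that] assms(1) by simp
  show ?thesis
  proof (intro allI impI)
    fix h l :: "bit^'m" and f1 f2
    assume H: "h \<noteq> 0 \<and> l \<noteq> 0 \<and> h \<noteq> l \<and> f1 \<in> F \<and> f2 \<in> F \<and> f1 \<noteq> f2"
    have hl: "h + l \<noteq> 0"
    proof
      assume "h + l = 0"
      then have "h + l + l = l" by simp
      then have "h = l" by (simp add: add.assoc vec_self_add)
      then show False using H by blast
    qed
    have main: "walsh f1 (h + l) + walsh f2 h - walsh (\<lambda>x. f1 x + f2 x) l \<noteq> 2 ^ m \<and>
           walsh f1 (h + l) + walsh f2 l - walsh (\<lambda>x. f1 x + f2 x) h \<noteq> 2 ^ m"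
      if e1: "f1 = fS E I1" and e2: "f2 = fS E I2" and e3: "(\<lambda>x. f1 x + f2 x) = fS E I3"
        and I: "I1 \<subseteq> {1..\<alpha>}" "I2 \<subseteq> {1..\<alpha>}" "I3 \<subseteq> {1..\<alpha>}"
        and c: "int (card I1) + int (card I2) - int (card I3) < 2 ^ t"
      for I1 I2 I3
    proof -
      have h0: "h \<noteq> 0" and l0: "l \<noteq> 0" using H by blast+
      show ?thesis unfolding e3 unfolding e1 e2 using K[OF I c hl h0 l0] K[OF I c hl l0 h0] by (rule conjI)
    qed
    have e_fg: "(\<lambda>x. f x + g x) = fS E C" by (rule ffC)
    have "(\<lambda>x. g x + f x) = (\<lambda>x. f x + g x)" by (rule ext) (rule add.commute)
    then have e_gf: "(\<lambda>x. g x + f x) = fS E C" using ffC by (rule trans)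
    have "(\<lambda>x. f x + (f x + g x)) = g" by (rule ext) (rule bit_canc(1))
    then have e_fC: "(\<lambda>x. f x + (f x + g x)) = fS E B" using ffB by (rule trans)
    have "(\<lambda>x. (f x + g x) + f x) = g" by (rule ext) (rule bit_canc(2))
    then have e_Cf: "(\<lambda>x. (f x + g x) + f x) = fS E B" using ffB by (rule trans)
    have "(\<lambda>x. g x + (f x + g x)) = f" by (rule ext) (rule bit_canc(4))
    then have e_gC: "(\<lambda>x. g x + (f x + g x)) = fS E A" using ffA by (rule trans)
    have "(\<lambda>x. (f x + g x) + g x) = f" by (rule ext) (rule bit_canc(3))
    then have e_Cg: "(\<lambda>x. (f x + g x) + g x) = fS E A" using ffA by (rule trans)
    have cA: "int (card A) = int s" "int (card B) = int s" using assms(10,11) by simp_all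
    have c1: "int (card A) + int (card B) - int (card C) < 2 ^ t" using cA cC' X8 by linarith
    have c2: "int (card B) + int (card A) - int (card C) < 2 ^ t" using cA cC' X8 by linarith
    have c3: "int (card A) + int (card C) - int (card B) < 2 ^ t" using cA cC' sX by linarith
    have c4: "int (card C) + int (card A) - int (card B) < 2 ^ t" using cA cC' sX by linarith
    have c5: "int (card B) + int (card C) - int (card A) < 2 ^ t" using cA cC' sX by linarith
    have c6: "int (card C) + int (card B) - int (card A) < 2 ^ t" using cA cC' sX by linarith
    have AB: "A \<subseteq> {1..\<alpha>}" "B \<subseteq> {1..\<alpha>}" by fact+
    have H1: "f1 \<in> F" "f2 \<in> F" and ne: "f1 \<noteq> f2" using H by blast+
    have F1: "f1 = f \<or> f1 = g \<or> f1 = (\<lambda>x. f x + g x)" using H1(1) unfolding assms(15) by (simp only: insert_iff empty_iff simp_thms)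
    have F2: "f2 = f \<or> f2 = g \<or> f2 = (\<lambda>x. f x + g x)" using H1(2) unfolding assms(15) by (simp only: insert_iff empty_iff simp_thms)
    show "walsh f1 (h + l) + walsh f2 h - walsh (\<lambda>x. f1 x + f2 x) l \<noteq> 2 ^ m \<and>
           walsh f1 (h + l) + walsh f2 l - walsh (\<lambda>x. f1 x + f2 x) h \<noteq> 2 ^ m"
    proof -
      have r1: ?thesis if a: "f1 = f" "f2 = g"
      proof -
        have "(\<lambda>x. f1 x + f2 x) = fS E C" using e_fg unfolding a .
        from main[OF trans[OF a(1) ffA] trans[OF a(2) ffB] this AB C c1] show ?thesis .
      qed
      have r2: ?thesis if a: "f1 = g" "f2 = f"
      proof -
        have "(\<lambda>x. f1 x + f2 x) = fS E C" using e_gf unfolding a .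
        from main[OF trans[OF a(1) ffB] trans[OF a(2) ffA] this AB(2) AB(1) C c2] show ?thesis .
      qed
      have r3: ?thesis if a: "f1 = f" "f2 = (\<lambda>x. f x + g x)"
      proof -
        have "(\<lambda>x. f1 x + f2 x) = fS E B" using e_fC unfolding a .
        from main[OF trans[OF a(1) ffA] trans[OF a(2) ffC] this AB(1) C AB(2) c3] show ?thesis .
      qed
      have r4: ?thesis if a: "f1 = (\<lambda>x. f x + g x)" "f2 = f"
      proof -
        have "(\<lambda>x. f1 x + f2 x) = fS E B" using e_Cf unfolding a .
        from main[OF trans[OF a(1) ffC] trans[OF a(2) ffA] this C AB(1) AB(2) c4] show ?thesis .
      qed
      have r5: ?thesis if a: "f1 = g" "f2 = (\<lambda>x. f x + g x)"
      proof -
        have "(\<lambda>x. f1 x + f2 x) = fS E A" using e_gC unfolding a .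
        from main[OF trans[OF a(1) ffB] trans[OF a(2) ffC] this AB(2) C AB(1) c5] show ?thesis .
      qed
      have r6: ?thesis if a: "f1 = (\<lambda>x. f x + g x)" "f2 = g"
      proof -
        have "(\<lambda>x. f1 x + f2 x) = fS E A" using e_Cg unfolding a .
        from main[OF trans[OF a(1) ffC] trans[OF a(2) ffB] this C AB(2) AB(1) c6] show ?thesis .
      qed
      show ?thesis
      proof (cases "f1 = f")
        case T1: True
        then have "f2 \<noteq> f" using ne by blast
        then have "f2 = g \<or> f2 = (\<lambda>x. f x + g x)" using F2 by blast
        then show ?thesis using r1[OF T1] r3[OF T1] by blast
      next
        case N1: False
        show ?thesis
        proof (cases "f1 = g")
          case T2: True
          then have "f2 \<noteq> g" using ne by blast
          then have "f2 = f \<or> f2 = (\<lambda>x. f x + g x)" using F2 by blast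
          then show ?thesis using r2[OF T2] r5[OF T2] by blast
        next
          case N2: False
          then have T3: "f1 = (\<lambda>x. f x + g x)" using F1 N1 by blast
          then have "f2 \<noteq> (\<lambda>x. f x + g x)" using ne by blast
          then have "f2 = f \<or> f2 = g" using F2 by blast
          then show ?thesis using r4[OF T3] r6[OF T3] by blast
        qed
      qed
    qed
  qed
qed

end
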